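(* Let $U$ be a Banach space with a normalized unconditional basis $(u_j)_{j=1}^\infty$ whose normalized associated coordinate functionals $(u_j^* )$ form an unconditional weak$^*$ Schauder basis of $U^*$, and suppose $U^*$ with $(u_j^* )$ satisfies condition (C). Let $1\le p\le\infty$, let $\Lambda_i\subset\mathbb{N}$, $i\in\mathbb{N}$, be infinite sets, let $\varphi\in(\ell^p(U^* ))^*$ and $\eta>0$. Then there exist infinite sets $\mathcal{J}_i\subset\Lambda_i$, $i\in\mathbb{N}$, such that $$\sup_{\|y\|_{\ell^p(U^* )}\le1}|\langle\varphi,R_{\{i\}\times\mathcal{J}_i}y\rangle|\le\eta\qquad\text{for all } i\in\mathbb{N}.$$
   Context: Weak$^*$ Schauder basis: coordinate functionals $(u_j^* )$ of $(u_j)$ with $x^*=\text{weak}^*\text{-}\lim_n\sum_{j=1}^n\langle x^*,u_j\rangle u_j^*$ for all $x^*\in U^*$. Unconditional with constant $K_u$ as usual. For $\mathcal{A}\subset\mathbb{N}$, $P_{\mathcal{A}}(\sum_ja_ju_j^* )=\sum_{j\in\mathcal{A}}a_ju_j^*$ (weak$^*$ convergent series). Condition (C): for every infinite $\Lambda\subset\mathbb{N}$ and $\theta>0$ there is a sequence $(\mathcal{A}_j)$ of pairwise disjoint infinite subsets of $\Lambda$ such that for every $(x_j^* )\subset U^*$ with $\|x_j^*\|\le1$ there are scalars $(a_j)\in\ell^1$, $\|(a_j)\|_{\ell^1}=1$, with $\|\sum_ja_jP_{\mathcal{A}_j}x_j^*\|_{U^*}\le\theta$. $\ell^p(U^* )$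 is the $\ell^p$-sum of copies of $U^*$. For $i\in\mathbb{N}$ and $\mathcal{J}\subset\mathbb{N}$, $R_{\{i\}\times\mathcal{J}}:\ell^p(U^* )\to\ell^p(U^* )$ maps $y=(y_n)_n$ to the sequence whose $i$-th coordinate is $P_{\mathcal{J}}y_i$ and whose other coordinates are $0$. *)

theory Defs
  imports "HOL-Analysis.Analysis"
begin

(* Real scalars. The dual space U* is modelled as the Banach space of bounded
linear functionals 'u =>L real with the operator norm. *)

definition biorthogonal :: "(nat \<Rightarrow> 'u::real_normed_vector) \<Rightarrow> (nat \<Rightarrow> 'u \<Rightarrow>\<^sub>L real) \<Rightarrow> bool" where
  "biorthogonal u us \<longleftrightarrow>
     (\<forall>i j. blinfun_apply (us i) (u j) = (if i = j then 1 else 0))"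

definition unconditional_basis :: "(nat \<Rightarrow> 'u::real_normed_vector) \<Rightarrow> (nat \<Rightarrow> 'u \<Rightarrow>\<^sub>L real) \<Rightarrow> bool" where
  "unconditional_basis u us \<longleftrightarrow> biorthogonal u us \<and>
     (\<forall>x. ((\<lambda>j. blinfun_apply (us j) x *\<^sub>R u j) has_sum x) UNIV)"

definition weak_star_schauder_basis :: "(nat \<Rightarrow> 'u::real_normed_vector) \<Rightarrow> (nat \<Rightarrow> 'u \<Rightarrow>\<^sub>L real) \<Rightarrow> bool" where
  "weak_star_schauder_basis u us \<longleftrightarrow>
     (\<forall>xs::'u \<Rightarrow>\<^sub>L real. \<forall>x.
        (\<lambda>j. blinfun_apply xs (u j) * blinfun_apply (us j) x) sums blinfun_apply xs x)"

definition weak_star_unconditional :: "(nat \<Rightarrow> 'u::real_normed_vector) \<Rightarrow> (nat \<Rightarrow> 'u \<Rightarrow>\<^sub>L real) \<Rightarrow> bool" where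
  "weak_star_unconditional u us \<longleftrightarrow>
     (\<forall>xs::'u \<Rightarrow>\<^sub>L real. \<forall>x.
        ((\<lambda>j. blinfun_apply xs (u j) * blinfun_apply (us j) x) has_sum blinfun_apply xs x) UNIV)"

definition dual_proj :: "(nat \<Rightarrow> 'u::real_normed_vector) \<Rightarrow> (nat \<Rightarrow> 'u \<Rightarrow>\<^sub>L real) \<Rightarrow> nat set
     \<Rightarrow> ('u \<Rightarrow>\<^sub>L real) \<Rightarrow> ('u \<Rightarrow>\<^sub>L real)" where
  "dual_proj u us A xs = (THE ys. \<forall>x.
      (\<lambda>j. if j \<in> A then blinfun_apply xs (u j) * blinfun_apply (us j) x else 0)
        sums blinfun_apply ys x)"

definition condition_C :: "(nat \<Rightarrow> 'u::real_normed_vector) \<Rightarrow> (nat \<Rightarrow> 'u \<Rightarrow>\<^sub>L real) \<Rightarrow> bool" where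
  "condition_C u us \<longleftrightarrow>
     (\<forall>\<Lambda>::nat set. \<forall>\<theta>::real. infinite \<Lambda> \<and> \<theta> > 0 \<longrightarrow>
       (\<exists>A :: nat \<Rightarrow> nat set. (\<forall>j. A j \<subseteq> \<Lambda> \<and> infinite (A j)) \<and> disjoint_family A \<and>
         (\<forall>xs :: nat \<Rightarrow> ('u \<Rightarrow>\<^sub>L real). (\<forall>j. norm (xs j) \<le> 1) \<longrightarrow>
            (\<exists>(a :: nat \<Rightarrow> real) s. summable (\<lambda>j. \<bar>a j\<bar>) \<and> (\<Sum>j. \<bar>a j\<bar>) = 1 \<and>
               (\<lambda>j. a j *\<^sub>R dual_proj u us (A j) (xs j)) sums s \<and> norm s \<le> \<theta>))))"

definition lp_space :: "ereal \<Rightarrow> (nat \<Rightarrow> 'a::real_normed_vector) set" where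
  "lp_space p = {y. if p = \<infinity> then bounded (range (\<lambda>n. norm (y n)))
                    else summable (\<lambda>n. norm (y n) powr real_of_ereal p)}"

definition lp_norm :: "ereal \<Rightarrow> (nat \<Rightarrow> 'a::real_normed_vector) \<Rightarrow> real" where
  "lp_norm p y = (if p = \<infinity> then (SUP n. norm (y n))
                  else (\<Sum>n. norm (y n) powr real_of_ereal p) powr (1 / real_of_ereal p))"

definition lp_dual :: "ereal \<Rightarrow> ((nat \<Rightarrow> 'a::real_normed_vector) \<Rightarrow> real) \<Rightarrow> bool" where
  "lp_dual p \<phi> \<longleftrightarrow>
     (\<forall>y\<in>lp_space p. \<forall>z\<in>lp_space p. \<phi> (\<lambda>n. y n + z n) = \<phi> y + \<phi> z) \<and>
     (\<forall>y\<in>lp_space p. \<forall>c. \<phi> (\<lambda>n. c *\<^sub>R y n) = c * \<phi> y) \<and>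
     (\<exists>C. \<forall>y\<in>lp_space p. \<bar>\<phi> y\<bar> \<le> C * lp_norm p y)"

definition R_op :: "(nat \<Rightarrow> 'u::real_normed_vector) \<Rightarrow> (nat \<Rightarrow> 'u \<Rightarrow>\<^sub>L real) \<Rightarrow> nat \<Rightarrow> nat set
     \<Rightarrow> (nat \<Rightarrow> ('u \<Rightarrow>\<^sub>L real)) \<Rightarrow> (nat \<Rightarrow> ('u \<Rightarrow>\<^sub>L real))" where
  "R_op u us i J y = (\<lambda>n. if n = i then dual_proj u us J (y i) else 0)"

end

theory Submission
  imports Defs
begin



lemma banach_steinhaus_fam:
  fixes T :: "'i \<Rightarrow> 'a::banach \<Rightarrow> 'b::real_normed_vector"
  assumes bl: "\<And>i. bounded_linear (T i)" and pb: "\<And>x. \<exists>M. \<forall>i. norm (T i x) \<le> M"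
  shows "\<exists>K\<ge>0. \<forall>i x. norm (T i x) \<le> K * norm x"
proof -
  define E where "E n = {x. \<forall>i. norm (T i x) \<le> real n}" for n :: nat
  have clE: "closed (E n)" for n
  proof -
    have "E n = (\<Inter>i. {x. norm (T i x) \<le> real n})" by (auto simp: E_def)
    moreover have "closed {x. norm (T i x) \<le> real n}" for i
      by (intro closed_Collect_le continuous_intros linear_continuous_on bl continuous_on_norm)
    ultimately show ?thesis by auto
  qed
  have UE: "\<Union>(range E) = UNIV"
  proof safe
    fix x
    obtain M where "\<forall>i. norm (T i x) \<le> M" using pb by blast
    moreover obtain n where "M \<le> real n" using real_arch_simple by blast
    ultimately have "x \<in> E n" by (auto simp: E_def intro: order_trans)
    then show "x \<in> \<Union>(range E)" by blast
  qed auto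
  have "\<exists>n. euclidean interior_of (E n) \<noteq> {}"
  proof (rule ccontr)
    assume "\<not> ?thesis"
    have "euclidean interior_of \<Union>(range E) = {}"
    proof (rule Baire_category_alt)
      show "completely_metrizable_space (euclidean::'a topology) \<or> locally_compact_space (euclidean::'a topology) \<and> regular_space (euclidean::'a topology)"
        using completely_metrizable_space_euclidean[where 'a='a] by blast
      fix T assume "T \<in> range E"
      then obtain m where "T = E m" by blast
      have c1: "closedin euclidean (E m)" using clE[of m] closed_closedin by blast
      have c2: "euclidean interior_of (E m) = {}"
        using \<open>\<not> (\<exists>n. euclidean interior_of E n \<noteq> {})\<close> by blast
      show "closedin euclidean T \<and> euclidean interior_of T = {}"
        using c1 c2 \<open>T = E m\<close> by blast
    qed simp
    then show False using UE by simp
  qed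
  then obtain n x0 where "x0 \<in> euclidean interior_of (E n)" by blast
  then obtain S where S0: "openin euclidean S" "x0 \<in> S" "S \<subseteq> E n"
    unfolding interior_of_def by blast
  have S: "open S" "x0 \<in> S" "S \<subseteq> E n" using S0 open_openin by blast+
  obtain r where r0: "r > 0" "ball x0 r \<subseteq> S"
    using open_contains_ball S(1) S(2) by blast
  have r: "r > 0" "ball x0 r \<subseteq> E n" using r0 S(3) by auto
  have x0E: "x0 \<in> E n" using r by auto
  show ?thesis
  proof (intro exI[of _ "4 * real n / r"] conjI allI)
    show "0 \<le> 4 * real n / r" using r by simp
    fix i x
    show "norm (T i x) \<le> 4 * real n / r * norm x"
    proof (cases "x = 0")
      case True then show ?thesis using linear_0[OF bounded_linear.linear[OF bl]] by simp
    next
      case False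
      define c where "c = r / (2 * norm x)"
      have c: "c > 0" using False r by (simp add: c_def)
      have "norm (c *\<^sub>R x) = r / 2" using False r by (simp add: c_def)
      then have "x0 + c *\<^sub>R x \<in> ball x0 r" using r by (simp add: dist_norm)
      then have "x0 + c *\<^sub>R x \<in> E n" using r by blast
      then have a: "norm (T i (x0 + c *\<^sub>R x)) \<le> real n" by (simp add: E_def)
      have b: "norm (T i x0) \<le> real n" using x0E by (simp add: E_def)
      have "T i (x0 + c *\<^sub>R x) = T i x0 + c *\<^sub>R T i x"
        using bl[of i] by (simp add: linear_add linear_scale bounded_linear.linear)
      then have e: "c *\<^sub>R T i x = T i (x0 + c *\<^sub>R x) - T i x0" by simp
      have "norm (c *\<^sub>R T i x) \<le> norm (T i (x0 + c *\<^sub>R x)) + norm (T i x0)"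
        unfolding e by (rule norm_triangle_ineq4)
      then have "norm (c *\<^sub>R T i x) \<le> 2 * real n" using a b by linarith
      then have "c * norm (T i x) \<le> 2 * real n" using c by simp
      then have "norm (T i x) \<le> 2 * real n / c" using c by (simp add: field_simps)
      also have "\<dots> = 4 * real n / r * norm x" using False r by (simp add: c_def field_simps)
      finally show ?thesis .
    qed
  qed
qed



lemma has_sum_finite_bound:
  fixes f :: "'a \<Rightarrow> 'b::real_normed_vector"
  assumes "(f has_sum s) A"
  shows "\<exists>M. \<forall>G. finite G \<and> G \<subseteq> A \<longrightarrow> norm (sum f G) \<le> M"
proof -
  have "(sum f \<longlongrightarrow> s) (finite_subsets_at_top A)" using assms by (simp add: has_sum_def)
  then have "eventually (\<lambda>F. dist (sum f F) s < 1) (finite_subsets_at_top A)"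
    by (rule tendstoD) simp
  then obtain X where X: "finite X" "X \<subseteq> A" "\<And>Y. finite Y \<Longrightarrow> X \<subseteq> Y \<Longrightarrow> Y \<subseteq> A \<Longrightarrow> dist (sum f Y) s < 1"
    by (auto simp: eventually_finite_subsets_at_top)
  show ?thesis
  proof (intro exI[of _ "norm s + 1 + (\<Sum>j\<in>X. norm (f j))"] allI impI)
    fix G assume G: "finite G \<and> G \<subseteq> A"
    have e: "sum f G = sum f (G \<union> X) - sum f (X - G)"
    proof -
      have "sum f (G \<union> X) = sum f G + sum f (X - G)"
        using G X by (metis Un_Diff_cancel finite_Diff inf_commute sum.union_disjoint Diff_disjoint)
      then show ?thesis by simp
    qed
    have a: "norm (sum f (G \<union> X)) \<le> norm s + 1"
    proof -
      have "dist (sum f (G \<union> X)) s < 1" using X(3)[of "G \<union> X"] G X by auto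
      then have "norm (sum f (G \<union> X) - s) < 1" by (simp add: dist_norm)
      moreover have "norm (sum f (G \<union> X)) \<le> norm (sum f (G \<union> X) - s) + norm s"
        using norm_triangle_ineq4[of "sum f (G \<union> X) - s" "-s"] by simp
      ultimately show ?thesis by simp
    qed
    have b: "norm (sum f (X - G)) \<le> (\<Sum>j\<in>X. norm (f j))"
    proof -
      have "norm (sum f (X - G)) \<le> (\<Sum>j\<in>X - G. norm (f j))" by (rule norm_sum)
      also have "\<dots> \<le> (\<Sum>j\<in>X. norm (f j))" using X by (intro sum_mono2) auto
      finally show ?thesis .
    qed
    show "norm (sum f G) \<le> norm s + 1 + (\<Sum>j\<in>X. norm (f j))"
      unfolding e using a b norm_triangle_ineq4[of "sum f (G \<union> X)" "sum f (X - G)"] by simp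
  qed
qed



definition Qop :: "(nat \<Rightarrow> 'u::real_normed_vector) \<Rightarrow> (nat \<Rightarrow> 'u \<Rightarrow>\<^sub>L real) \<Rightarrow> nat set \<Rightarrow> 'u \<Rightarrow> 'u" where
  "Qop u us B x = infsum (\<lambda>j. blinfun_apply (us j) x *\<^sub>R u j) B"

definition Pop :: "(nat \<Rightarrow> 'u::real_normed_vector) \<Rightarrow> (nat \<Rightarrow> 'u \<Rightarrow>\<^sub>L real) \<Rightarrow> nat set \<Rightarrow> ('u \<Rightarrow>\<^sub>L real) \<Rightarrow> ('u \<Rightarrow>\<^sub>L real)" where
  "Pop u us B xs = Blinfun (\<lambda>x. blinfun_apply xs (Qop u us B x))"

context
  fixes u :: "nat \<Rightarrow> 'u::banach" and us :: "nat \<Rightarrow> ('u \<Rightarrow>\<^sub>L real)"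
  assumes ub: "unconditional_basis u us"
begin

lemma ub_has_sum: "((\<lambda>j. blinfun_apply (us j) x *\<^sub>R u j) has_sum x) UNIV"
  using ub by (simp add: unconditional_basis_def)

lemma ub_summable: "(\<lambda>j. blinfun_apply (us j) x *\<^sub>R u j) summable_on B"
  using ub_has_sum[of x] summable_on_subset_banach[of _ UNIV B] by (auto simp: summable_on_def)

lemma Qop_has_sum: "((\<lambda>j. blinfun_apply (us j) x *\<^sub>R u j) has_sum Qop u us B x) B"
  unfolding Qop_def using ub_summable by (rule has_sum_infsum)

lemma finite_sums_bound:
  "\<exists>K\<ge>0. \<forall>F x. finite F \<longrightarrow> norm (\<Sum>j\<in>F. blinfun_apply (us j) x *\<^sub>R u j) \<le> K * norm x"
proof -
  define T where "T F x = (if finite F then (\<Sum>j\<in>F. blinfun_apply (us j) x *\<^sub>R u j) else 0)" for F x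
  have "bounded_linear (T F)" for F
    unfolding T_def
    by (cases "finite F") (auto intro!: bounded_linear_sum bounded_linear_scaleR_left
          bounded_linear_compose[OF _ blinfun.bounded_linear_right] bounded_linear_zero)
  moreover have "\<exists>M. \<forall>F. norm (T F x) \<le> M" for x
  proof -
    obtain M where "\<forall>G. finite G \<and> G \<subseteq> UNIV \<longrightarrow> norm (\<Sum>j\<in>G. blinfun_apply (us j) x *\<^sub>R u j) \<le> M"
      using has_sum_finite_bound[OF ub_has_sum[of x]] by blast
    then show ?thesis by (intro exI[of _ "max M 0"]) (auto simp: T_def)
  qed
  ultimately obtain K where "K \<ge> 0" "\<forall>F x. norm (T F x) \<le> K * norm x"
    using banach_steinhaus_fam[of T] by blast
  then show ?thesis by (intro exI[of _ K]) (auto simp: T_def split: if_splits)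
qed

lemma Qop_bound: "\<exists>K\<ge>0. \<forall>B x. norm (Qop u us B x) \<le> K * norm x"
proof -
  obtain K where K: "K \<ge> 0" "\<And>F x. finite F \<Longrightarrow> norm (\<Sum>j\<in>F. blinfun_apply (us j) x *\<^sub>R u j) \<le> K * norm x"
    using finite_sums_bound by blast
  have "norm (Qop u us B x) \<le> K * norm x" for B x
  proof -
    have lim: "((\<lambda>F. norm (\<Sum>j\<in>F. blinfun_apply (us j) x *\<^sub>R u j)) \<longlongrightarrow> norm (Qop u us B x)) (finite_subsets_at_top B)"
      using Qop_has_sum[of x B] unfolding has_sum_def by (rule tendsto_norm)
    show ?thesis
      by (rule tendsto_upperbound[OF lim]) (auto intro!: eventually_finite_subsets_at_top_weakI K(2))
  qed
  then show ?thesis using K(1) by blast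
qed

lemma Qop_add: "Qop u us B (x + y) = Qop u us B x + Qop u us B y"
  unfolding Qop_def
  by (simp add: blinfun.add_right scaleR_add_left infsum_add[OF ub_summable ub_summable])

lemma Qop_scale: "Qop u us B (c *\<^sub>R x) = c *\<^sub>R Qop u us B x"
  unfolding Qop_def
  by (simp add: blinfun.scaleR_right infsum_scaleR_right[symmetric])

lemma Qop_bl: "bounded_linear (Qop u us B)"
proof -
  obtain K where "\<forall>B x. norm (Qop u us B x) \<le> K * norm x" using Qop_bound by blast
  then show ?thesis
    by (intro bounded_linear_intro[of _ K]) (auto simp: Qop_add Qop_scale mult.commute)
qed

lemma coord_Qop: "blinfun_apply (us k) (Qop u us B x) = (if k \<in> B then blinfun_apply (us k) x else 0)"
proof -
  have bo: "biorthogonal u us" using ub by (simp add: unconditional_basis_def)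
  have h1: "((\<lambda>j. blinfun_apply (us k) (blinfun_apply (us j) x *\<^sub>R u j)) has_sum blinfun_apply (us k) (Qop u us B x)) B"
    by (rule has_sum_bounded_linear[OF blinfun.bounded_linear_right Qop_has_sum])
  have eq: "blinfun_apply (us k) (blinfun_apply (us j) x *\<^sub>R u j) = (if j = k then blinfun_apply (us k) x else 0)" for j
    using bo by (simp add: biorthogonal_def blinfun.scaleR_right)
  have h2: "((\<lambda>j. if j = k then blinfun_apply (us k) x else 0) has_sum (if k \<in> B then blinfun_apply (us k) x else 0)) B"
  proof -
    have "((\<lambda>j. if j = k then blinfun_apply (us k) x else 0) has_sum (if k \<in> B then blinfun_apply (us k) x else 0)) (B \<inter> {k})"
      by (rule has_sum_finiteI) auto
    then show ?thesis by (subst has_sum_cong_neutral[where T="B \<inter> {k}" and g="\<lambda>j. if j = k then blinfun_apply (us k) x else 0"]) auto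
  qed
  show ?thesis using has_sum_unique[OF h1[unfolded eq] h2] .
qed

lemma Qop_comp: "Qop u us A (Qop u us B x) = Qop u us (A \<inter> B) x"
proof -
  have "Qop u us A (Qop u us B x) = infsum (\<lambda>j. (if j \<in> B then blinfun_apply (us j) x else 0) *\<^sub>R u j) A"
    unfolding Qop_def[of u us A] by (simp add: coord_Qop)
  also have "\<dots> = Qop u us (A \<inter> B) x"
    unfolding Qop_def by (rule infsum_cong_neutral) auto
  finally show ?thesis .
qed

lemma Qop_empty: "Qop u us {} x = 0"
  by (simp add: Qop_def)

lemma Pop_apply: "blinfun_apply (Pop u us B xs) x = blinfun_apply xs (Qop u us B x)"
  unfolding Pop_def
  by (simp add: bounded_linear_Blinfun_apply[OF bounded_linear_compose[OF blinfun.bounded_linear_right Qop_bl]])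

lemma dual_proj_Pop: "dual_proj u us B xs = Pop u us B xs"
  unfolding dual_proj_def
proof (rule the_equality)
  show "\<forall>x. (\<lambda>j. if j \<in> B then blinfun_apply xs (u j) * blinfun_apply (us j) x else 0) sums blinfun_apply (Pop u us B xs) x"
  proof
    fix x
    have h1: "((\<lambda>j. blinfun_apply xs (blinfun_apply (us j) x *\<^sub>R u j)) has_sum blinfun_apply xs (Qop u us B x)) B"
      by (rule has_sum_bounded_linear[OF blinfun.bounded_linear_right Qop_has_sum])
    have "((\<lambda>j. if j \<in> B then blinfun_apply xs (u j) * blinfun_apply (us j) x else 0) has_sum blinfun_apply xs (Qop u us B x)) UNIV"
      using h1 by (subst has_sum_cong_neutral[where T=B and g="\<lambda>j. blinfun_apply xs (blinfun_apply (us j) x *\<^sub>R u j)"])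
        (auto simp: blinfun.scaleR_right)
    then show "(\<lambda>j. if j \<in> B then blinfun_apply xs (u j) * blinfun_apply (us j) x else 0) sums blinfun_apply (Pop u us B xs) x"
      by (simp add: Pop_apply has_sum_imp_sums)
  qed
  fix ys
  assume ys: "\<forall>x. (\<lambda>j. if j \<in> B then blinfun_apply xs (u j) * blinfun_apply (us j) x else 0) sums blinfun_apply ys x"
  show "ys = Pop u us B xs"
  proof (rule blinfun_eqI)
    fix x
    have "(\<lambda>j. if j \<in> B then blinfun_apply xs (u j) * blinfun_apply (us j) x else 0) sums blinfun_apply (Pop u us B xs) x"
    proof -
      have h1: "((\<lambda>j. blinfun_apply xs (blinfun_apply (us j) x *\<^sub>R u j)) has_sum blinfun_apply xs (Qop u us B x)) B"
        by (rule has_sum_bounded_linear[OF blinfun.bounded_linear_right Qop_has_sum])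
      have "((\<lambda>j. if j \<in> B then blinfun_apply xs (u j) * blinfun_apply (us j) x else 0) has_sum blinfun_apply xs (Qop u us B x)) UNIV"
        using h1 by (subst has_sum_cong_neutral[where T=B and g="\<lambda>j. blinfun_apply xs (blinfun_apply (us j) x *\<^sub>R u j)"])
          (auto simp: blinfun.scaleR_right)
      then show ?thesis by (simp add: Pop_apply has_sum_imp_sums)
    qed
    then show "blinfun_apply ys x = blinfun_apply (Pop u us B xs) x"
      using ys sums_unique2 by blast
  qed
qed

lemma Pop_comp: "Pop u us B (Pop u us A xs) = Pop u us (A \<inter> B) xs"
  by (rule blinfun_eqI) (simp add: Pop_apply Qop_comp)

lemma Pop_empty: "Pop u us {} xs = 0"
  by (rule blinfun_eqI) (simp add: Pop_apply Qop_empty)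

lemma Pop_sub: "A \<subseteq> B \<Longrightarrow> Pop u us B (Pop u us A xs) = Pop u us A xs"
  by (simp add: Pop_comp Int_absorb2)

lemma Pop_disj: "A \<inter> B = {} \<Longrightarrow> Pop u us B (Pop u us A xs) = 0"
  by (simp add: Pop_comp Pop_empty)

lemma Pop_bl: "\<exists>K\<ge>0. \<forall>B. bounded_linear (Pop u us B) \<and> (\<forall>xs. norm (Pop u us B xs) \<le> K * norm xs)"
proof -
  obtain K where K: "K \<ge> 0" "\<And>B x. norm (Qop u us B x) \<le> K * norm x" using Qop_bound by blast
  have nb: "norm (Pop u us B xs) \<le> K * norm xs" for B xs
  proof (rule norm_blinfun_bound)
    show "0 \<le> K * norm xs" using K by simp
    fix x
    have "norm (blinfun_apply xs (Qop u us B x)) \<le> norm xs * norm (Qop u us B x)" by (rule norm_blinfun)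
    also have "\<dots> \<le> norm xs * (K * norm x)" by (intro mult_left_mono K(2)) simp
    finally show "norm (blinfun_apply (Pop u us B xs) x) \<le> K * norm xs * norm x"
      by (simp add: Pop_apply mult_ac)
  qed
  have "bounded_linear (Pop u us B)" for B
  proof (rule bounded_linear_intro[of _ K])
    show "Pop u us B (b1 + b2) = Pop u us B b1 + Pop u us B b2" for b1 b2
      by (rule blinfun_eqI) (simp add: Pop_apply blinfun.add_left)
    show "Pop u us B (r *\<^sub>R b) = r *\<^sub>R Pop u us B b" for r b
      by (rule blinfun_eqI) (simp add: Pop_apply blinfun.scaleR_left)
    show "norm (Pop u us B x) \<le> norm x * K" for x using nb[of B x] by (simp add: mult.commute)
  qed
  then show ?thesis using nb K(1) by blast
qed

end

definition sgl :: "nat \<Rightarrow> 'a::real_normed_vector \<Rightarrow> nat \<Rightarrow> 'a" where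
  "sgl i z = (\<lambda>n. if n = i then z else 0)"

lemma ereal_ge1_cases:
  assumes "1 \<le> (p::ereal)"
  obtains "p = \<infinity>" | q where "p = ereal q" "1 \<le> q"
  using assms by (cases p) auto

lemma sgl_norm_pow: "0 < q \<Longrightarrow> (\<lambda>n. norm (sgl i z n) powr q) = (\<lambda>n. if n = i then norm z powr q else 0)"
  by (auto simp: sgl_def)

lemma sgl_lp: assumes "1 \<le> p" shows "sgl i z \<in> lp_space p"
  using assms
proof (cases rule: ereal_ge1_cases)
  case 1
  have "range (\<lambda>n. norm (sgl i z n)) \<subseteq> {norm z, 0}" by (auto simp: sgl_def)
  then have "bounded (range (\<lambda>n. norm (sgl i z n)))"
    by (rule bounded_subset[rotated]) simp
  then show ?thesis using 1 by (simp add: lp_space_def)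
next
  case (2 q)
  have "summable (\<lambda>n. if n = i then norm z powr q else 0)"
    using sums_single[of i "\<lambda>_. norm z powr q"] by (auto simp: sums_iff)
  then show ?thesis using 2 by (simp add: lp_space_def sgl_norm_pow)
qed

lemma sgl_norm: assumes "1 \<le> p" shows "lp_norm p (sgl i z) = norm z"
  using assms
proof (cases rule: ereal_ge1_cases)
  case 1
  have bd: "bdd_above (range (\<lambda>n. norm (sgl i z n)))"
  proof -
    have "range (\<lambda>n. norm (sgl i z n)) \<subseteq> {norm z, 0}" by (auto simp: sgl_def)
    then have "bounded (range (\<lambda>n. norm (sgl i z n)))" by (rule bounded_subset[rotated]) simp
    then show ?thesis by (rule bounded_imp_bdd_above)
  qed
  have "(SUP n. norm (sgl i z n)) = norm z"
  proof (rule antisym)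
    show "(SUP n. norm (sgl i z n)) \<le> norm z" by (rule cSUP_least) (auto simp: sgl_def)
    show "norm z \<le> (SUP n. norm (sgl i z n))"
      using cSUP_upper[OF UNIV_I bd, of i] by (simp add: sgl_def)
  qed
  then show ?thesis using 1 by (simp add: lp_norm_def)
next
  case (2 q)
  have "(\<lambda>n. if n = i then norm z powr q else 0) sums (norm z powr q)"
    using sums_single[of i "\<lambda>_. norm z powr q"] by simp
  then have "(\<Sum>n. norm (sgl i z n) powr q) = norm z powr q"
    using 2 by (simp add: sgl_norm_pow sums_iff)
  moreover have "(norm z powr q) powr (1 / q) = norm z"
    using 2 by (simp add: powr_powr)
  ultimately show ?thesis using 2 by (simp add: lp_norm_def)
qed

lemma coord_le: assumes "1 \<le> p" "y \<in> lp_space p" shows "norm (y i) \<le> lp_norm p y"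
  using assms(1)
proof (cases rule: ereal_ge1_cases)
  case 1
  then have "bounded (range (\<lambda>n. norm (y n)))" using assms(2) by (simp add: lp_space_def)
  then have "bdd_above (range (\<lambda>n. norm (y n)))" by (rule bounded_imp_bdd_above)
  then show ?thesis using 1 cSUP_upper[OF UNIV_I, of "\<lambda>n. norm (y n)" i] by (simp add: lp_norm_def)
next
  case (2 q)
  then have sm: "summable (\<lambda>n. norm (y n) powr q)" using assms(2) by (simp add: lp_space_def)
  have "norm (y i) powr q \<le> (\<Sum>n. norm (y n) powr q)"
    using sum_le_suminf[OF sm, of "{i}"] by simp
  then have "(norm (y i) powr q) powr (1/q) \<le> (\<Sum>n. norm (y n) powr q) powr (1/q)"
    using 2 by (intro powr_mono2) auto
  moreover have "(norm (y i) powr q) powr (1 / q) = norm (y i)"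
    using 2 by (simp add: powr_powr)
  ultimately show ?thesis using 2 by (simp add: lp_norm_def)
qed

lemma psi_bl:
  fixes \<phi> :: "(nat \<Rightarrow> 'a::real_normed_vector) \<Rightarrow> real"
  assumes p: "1 \<le> p" and phi: "lp_dual p \<phi>"
  shows "bounded_linear (\<lambda>z. \<phi> (sgl i z))"
proof -
  obtain C where C: "\<forall>y\<in>lp_space p. \<bar>\<phi> y\<bar> \<le> C * lp_norm p y"
    using phi by (auto simp: lp_dual_def)
  have add: "\<phi> (sgl i (a + b)) = \<phi> (sgl i a) + \<phi> (sgl i b)" for a b
  proof -
    have e: "(\<lambda>n. sgl i a n + sgl i b n) = sgl i (a + b)" by (auto simp: sgl_def)
    have "\<phi> (\<lambda>n. sgl i a n + sgl i b n) = \<phi> (sgl i a) + \<phi> (sgl i b)"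
      using phi sgl_lp[OF p] unfolding lp_dual_def by blast
    then show ?thesis unfolding e .
  qed
  have sc: "\<phi> (sgl i (c *\<^sub>R a)) = c * \<phi> (sgl i a)" for a c
  proof -
    have e: "(\<lambda>n. c *\<^sub>R sgl i a n) = sgl i (c *\<^sub>R a)" by (auto simp: sgl_def)
    have "\<phi> (\<lambda>n. c *\<^sub>R sgl i a n) = c * \<phi> (sgl i a)"
      using phi sgl_lp[OF p] unfolding lp_dual_def by blast
    then show ?thesis unfolding e .
  qed
  have bd: "norm (\<phi> (sgl i z)) \<le> norm z * max C 0" for z
  proof -
    have "\<bar>\<phi> (sgl i z)\<bar> \<le> C * norm z" using C sgl_lp[OF p] sgl_norm[OF p] by metis
    also have "\<dots> \<le> max C 0 * norm z" by (intro mult_right_mono) auto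
    finally show ?thesis by (simp add: mult.commute)
  qed
  show ?thesis
    by (rule bounded_linear_intro[of _ "max C 0"]) (use add sc bd in auto)
qed

lemma key:
  fixes u :: "nat \<Rightarrow> 'u::banach" and us :: "nat \<Rightarrow> ('u \<Rightarrow>\<^sub>L real)"
    and \<psi> :: "('u \<Rightarrow>\<^sub>L real) \<Rightarrow> real"
  assumes ub: "unconditional_basis u us" and CC: "condition_C u us"
    and psi: "bounded_linear \<psi>" and Lam: "infinite \<Lambda>" and eta: "\<eta> > 0"
  shows "\<exists>J. J \<subseteq> \<Lambda> \<and> infinite J \<and> (\<forall>x. norm x \<le> 1 \<longrightarrow> \<bar>\<psi> (Pop u us J x)\<bar> \<le> \<eta>)"
proof -
  obtain Kp where Kp: "Kp > 0" "\<And>x. norm (\<psi> x) \<le> norm x * Kp"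
    using bounded_linear.pos_bounded[OF psi] by blast
  obtain K where K: "K \<ge> 0" "\<And>B. bounded_linear (Pop u us B)" "\<And>B xs. norm (Pop u us B xs) \<le> K * norm xs"
    using Pop_bl[OF ub] by blast
  define \<theta> where "\<theta> = \<eta> / (2 * K * Kp + 1)"
  have "0 \<le> 2 * K * Kp" using K(1) Kp(1) by simp
  then have den: "2 * K * Kp + 1 > 0" by linarith
  have th: "\<theta> > 0" using eta den by (simp add: \<theta>_def)
  have th2: "2 * K * Kp * \<theta> < \<eta>"
  proof -
    have "2 * K * Kp * \<theta> = \<eta> * (2 * K * Kp) / (2 * K * Kp + 1)" by (simp add: \<theta>_def)
    also have "\<dots> < \<eta>" using den eta by (simp add: divide_less_eq)
    finally show ?thesis .
  qed
  have CC1: "\<exists>A :: nat \<Rightarrow> nat set. (\<forall>j. A j \<subseteq> \<Lambda> \<and> infinite (A j)) \<and> disjoint_family A \<and>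
         (\<forall>xs :: nat \<Rightarrow> ('u \<Rightarrow>\<^sub>L real). (\<forall>j. norm (xs j) \<le> 1) \<longrightarrow>
            (\<exists>(a :: nat \<Rightarrow> real) s. summable (\<lambda>j. \<bar>a j\<bar>) \<and> (\<Sum>j. \<bar>a j\<bar>) = 1 \<and>
               (\<lambda>j. a j *\<^sub>R dual_proj u us (A j) (xs j)) sums s \<and> norm s \<le> \<theta>))"
    using CC[unfolded condition_C_def, rule_format, OF conjI[OF Lam th]] .
  then obtain A where A0: "(\<forall>j. A j \<subseteq> \<Lambda> \<and> infinite (A j)) \<and> disjoint_family A \<and>
         (\<forall>xs :: nat \<Rightarrow> ('u \<Rightarrow>\<^sub>L real). (\<forall>j. norm (xs j) \<le> 1) \<longrightarrow>
            (\<exists>(a :: nat \<Rightarrow> real) s. summable (\<lambda>j. \<bar>a j\<bar>) \<and> (\<Sum>j. \<bar>a j\<bar>) = 1 \<and>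
               (\<lambda>j. a j *\<^sub>R dual_proj u us (A j) (xs j)) sums s \<and> norm s \<le> \<theta>))"
    by (elim exE)
  have A: "\<And>j. A j \<subseteq> \<Lambda> \<and> infinite (A j)" "disjoint_family A" using A0 by auto
  have AC: "\<And>xs :: nat \<Rightarrow> ('u \<Rightarrow>\<^sub>L real). (\<forall>j. norm (xs j) \<le> 1) \<Longrightarrow>
            (\<exists>(a :: nat \<Rightarrow> real) s. summable (\<lambda>j. \<bar>a j\<bar>) \<and> (\<Sum>j. \<bar>a j\<bar>) = 1 \<and>
               (\<lambda>j. a j *\<^sub>R dual_proj u us (A j) (xs j)) sums s \<and> norm s \<le> \<theta>)"
    using A0 by blast
  show ?thesis
  proof (rule ccontr)
    assume "\<not> ?thesis"
    then have bad: "\<forall>j. \<exists>x. norm x \<le> 1 \<and> \<bar>\<psi> (Pop u us (A j) x)\<bar> > \<eta>"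
      using A(1) by (meson not_le)
    have "\<forall>j. \<exists>x. norm x \<le> 1 \<and> \<psi> (Pop u us (A j) x) > \<eta>"
    proof
      fix j
      obtain x where x: "norm x \<le> 1" "\<bar>\<psi> (Pop u us (A j) x)\<bar> > \<eta>" using bad by blast
      show "\<exists>x. norm x \<le> 1 \<and> \<psi> (Pop u us (A j) x) > \<eta>"
      proof (cases "\<psi> (Pop u us (A j) x) > \<eta>")
        case True then show ?thesis using x by blast
      next
        case False
        have "Pop u us (A j) (- x) = - Pop u us (A j) x"
          by (rule linear_neg[OF bounded_linear.linear[OF K(2)]])
        moreover have "\<psi> (- w) = - \<psi> w" for w
          by (rule linear_neg[OF bounded_linear.linear[OF psi]])
        ultimately have "\<psi> (Pop u us (A j) (- x)) > \<eta>" using x False by auto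
        then show ?thesis using x by (intro exI[of _ "-x"]) simp
      qed
    qed
    then obtain xs where xs: "\<And>j. norm (xs j) \<le> 1" "\<And>j. \<psi> (Pop u us (A j) (xs j)) > \<eta>"
      by metis
    obtain a s where a: "summable (\<lambda>j. \<bar>a j\<bar>)" "(\<Sum>j. \<bar>a j\<bar>) = 1"
      and s: "(\<lambda>j. a j *\<^sub>R Pop u us (A j) (xs j)) sums s" "norm s \<le> \<theta>"
      using AC[of xs] xs(1) by (auto simp: dual_proj_Pop[OF ub])
    define B where "B = (\<Union>j\<in>{j. a j > 0}. A j)"
    define D where "D = (\<Union>j\<in>{j. \<not> a j > 0}. A j)"
    define T where "T w = Pop u us B w - Pop u us D w" for w
    have Tbl: "bounded_linear T"
      unfolding T_def by (intro bounded_linear_sub K(2))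
    have disj: "A j \<inter> A k = {}" if "j \<noteq> k" for j k
      using A(2) that by (simp add: disjoint_family_on_def)
    have Tj: "a j *\<^sub>R T (Pop u us (A j) (xs j)) = \<bar>a j\<bar> *\<^sub>R Pop u us (A j) (xs j)" for j
    proof (cases "a j > 0")
      case True
      have "A j \<subseteq> B" using True by (auto simp: B_def)
      moreover have "A j \<inter> D = {}"
      proof -
        have "A j \<inter> A k = {}" if "\<not> a k > 0" for k
          using that True disj[of j k] by (cases "j = k") auto
        then show ?thesis by (auto simp: D_def)
      qed
      ultimately have "T (Pop u us (A j) (xs j)) = Pop u us (A j) (xs j)"
        by (simp add: T_def Pop_sub[OF ub] Pop_disj[OF ub])
      then show ?thesis using True by simp
    next
      case False
      have "A j \<subseteq> D" using False by (auto simp: D_def)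
      moreover have "A j \<inter> B = {}"
      proof -
        have "A j \<inter> A k = {}" if "a k > 0" for k
          using that False disj[of j k] by (cases "j = k") auto
        then show ?thesis by (auto simp: B_def)
      qed
      ultimately have "T (Pop u us (A j) (xs j)) = - Pop u us (A j) (xs j)"
        by (simp add: T_def Pop_sub[OF ub] Pop_disj[OF ub])
      then show ?thesis using False by simp
    qed
    have bl2: "bounded_linear (\<lambda>w. \<psi> (T w))"
      by (rule bounded_linear_compose[OF psi Tbl])
    have "(\<lambda>j. \<psi> (T (a j *\<^sub>R Pop u us (A j) (xs j)))) sums \<psi> (T s)"
      by (rule bounded_linear.sums[OF bl2 s(1)])
    moreover have "\<psi> (T (a j *\<^sub>R Pop u us (A j) (xs j))) = \<bar>a j\<bar> * \<psi> (Pop u us (A j) (xs j))" for j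
    proof -
      have "\<psi> (T (a j *\<^sub>R Pop u us (A j) (xs j))) = \<psi> (a j *\<^sub>R T (Pop u us (A j) (xs j)))"
        using Tbl by (simp add: linear_scale bounded_linear.linear)
      also have "\<dots> = \<psi> (\<bar>a j\<bar> *\<^sub>R Pop u us (A j) (xs j))" by (simp only: Tj)
      also have "\<dots> = \<bar>a j\<bar> * \<psi> (Pop u us (A j) (xs j))"
        using psi by (simp add: linear_scale bounded_linear.linear)
      finally show ?thesis .
    qed
    ultimately have S1: "(\<lambda>j. \<bar>a j\<bar> * \<psi> (Pop u us (A j) (xs j))) sums \<psi> (T s)" by simp
    have S2: "(\<lambda>j. \<bar>a j\<bar> * \<eta>) sums \<eta>"
      using sums_mult2[OF summable_sums[OF a(1)], of \<eta>] a(2) by simp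
    have low: "\<eta> \<le> \<psi> (T s)"
      by (rule sums_le[OF _ S2 S1]) (intro mult_left_mono less_imp_le[OF xs(2)], simp)
    have "\<psi> (T s) \<le> norm (T s) * Kp" using Kp(2)[of "T s"] by simp
    also have "norm (T s) \<le> 2 * K * \<theta>"
    proof -
      have "norm (T s) \<le> norm (Pop u us B s) + norm (Pop u us D s)"
        unfolding T_def by (rule norm_triangle_ineq4)
      also have "\<dots> \<le> K * norm s + K * norm s" by (intro add_mono K(3))
      also have "\<dots> \<le> 2 * K * \<theta>" using s(2) K(1) by (simp add: mult_left_mono)
      finally show ?thesis .
    qed
    then have "norm (T s) * Kp \<le> 2 * K * \<theta> * Kp" using Kp(1) by (simp add: mult_right_mono)
    finally have "\<psi> (T s) \<le> 2 * K * Kp * \<theta>" by (simp add: mult_ac)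
    then show False using low th2 by linarith
  qed
qed

theorem lemma5p2:
  fixes u :: "nat \<Rightarrow> 'u::banach"
    and us :: "nat \<Rightarrow> ('u \<Rightarrow>\<^sub>L real)"
    and p :: ereal
    and \<Lambda> :: "nat \<Rightarrow> nat set"
    and \<phi> :: "(nat \<Rightarrow> ('u \<Rightarrow>\<^sub>L real)) \<Rightarrow> real"
    and \<eta> :: real
  assumes u_norm: "\<forall>j. norm (u j) = 1"
    and u_basis: "unconditional_basis u us"
    and us_norm: "\<forall>j. norm (us j) = 1"
    and us_wstar: "weak_star_schauder_basis u us"
    and us_unc: "weak_star_unconditional u us"
    and C: "condition_C u us"
    and p: "1 \<le> p"
    and Lam: "\<forall>i. infinite (\<Lambda> i)"
    and phi: "lp_dual p \<phi>"
    and eta: "\<eta> > 0"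
  shows "\<exists>\<J> :: nat \<Rightarrow> nat set. (\<forall>i. \<J> i \<subseteq> \<Lambda> i \<and> infinite (\<J> i)) \<and>
           (\<forall>i. \<forall>y\<in>lp_space p. lp_norm p y \<le> 1 \<longrightarrow> \<bar>\<phi> (R_op u us i (\<J> i) y)\<bar> \<le> \<eta>)"
proof -
  have "\<forall>i. \<exists>J. J \<subseteq> \<Lambda> i \<and> infinite J \<and>
          (\<forall>x. norm x \<le> 1 \<longrightarrow> \<bar>\<phi> (sgl i (Pop u us J x))\<bar> \<le> \<eta>)"
  proof
    fix i
    show "\<exists>J. J \<subseteq> \<Lambda> i \<and> infinite J \<and> (\<forall>x. norm x \<le> 1 \<longrightarrow> \<bar>\<phi> (sgl i (Pop u us J x))\<bar> \<le> \<eta>)"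
      using key[OF u_basis C psi_bl[OF p phi, of i] _ eta, of "\<Lambda> i"] Lam by blast
  qed
  then obtain \<J> where J: "\<And>i. \<J> i \<subseteq> \<Lambda> i \<and> infinite (\<J> i)"
    "\<And>i x. norm x \<le> 1 \<Longrightarrow> \<bar>\<phi> (sgl i (Pop u us (\<J> i) x))\<bar> \<le> \<eta>"
    by metis
  show ?thesis
  proof (intro exI[of _ \<J>] conjI)
    show "\<forall>i. \<J> i \<subseteq> \<Lambda> i \<and> infinite (\<J> i)" using J(1) by blast
    show "\<forall>i. \<forall>y\<in>lp_space p. lp_norm p y \<le> 1 \<longrightarrow> \<bar>\<phi> (R_op u us i (\<J> i) y)\<bar> \<le> \<eta>"
    proof (intro allI ballI impI)
    fix i and y :: "nat \<Rightarrow> ('u \<Rightarrow>\<^sub>L real)" assume y: "y \<in> lp_space p" "lp_norm p y \<le> 1"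
    have "R_op u us i (\<J> i) y = sgl i (Pop u us (\<J> i) (y i))"
      unfolding R_op_def sgl_def dual_proj_Pop[OF u_basis, of "\<J> i" "y i"] by (rule refl)
    moreover have "norm (y i) \<le> 1" using coord_le[OF p y(1), of i] y(2) by linarith
    ultimately show "\<bar>\<phi> (R_op u us i (\<J> i) y)\<bar> \<le> \<eta>" using J(2) by simp
    qed
  qed
qed

end
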